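(* The set-valued map $V_\uparrow=V+P$ is outer semicontinuous at every point of $I\times\mathbb{R}^n$.
   Context: Setting (MOC). Fix $T>0$, $I=[0,T]$, integers $n,m,p\ge1$, nonempty compact $U\subset\mathbb{R}^m$. $f:\mathbb{R}^n\times U\to\mathbb{R}^n$ continuous with $\|f(x_1,u)-f(x_2,u)\|\le K_f\|x_1-x_2\|$, $\|f(x,u)\|\le M_f$. $L:\mathbb{R}^n\times U\to\mathbb{R}^p$ continuous with $\|L(x,u)\|\le M_L$, $\|L(x_1,u)-L(x_2,u)\|\le K_L\|x_1-x_2\|$. Controls $\mathcal{U}$: bounded measurable $u:I\to U$. $x(s;t,x,u)$ solves $\dot x=f(x,u(s))$ on $[t,T]$, $x(t)=x$; $J(t,T,x,u)=\int_t^{T}L(x(s;t,x,u),u(s))ds$; $Y(t,x)=\{J(t,T,x,u):u\in\mathcal{U}\}$. $P\subset\mathbb{R}^p$: closed convex pointed cone containing $0$ with nonempty interior; $\mathcal{E}(S,P)=\{y\in S:(y-P)\cap S=\{y\}\}$; $V(t,x)=\mathcal{E}(\mathrm{cl}\,Y(t,x),P)$. $F$ is outer semicontinuous at $z$ if $\{y:\exists z_k\to z,\exists y_k\to y,y_k\in F(z_k)\}\subset F(z)$. *)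

theory Defs
  imports "HOL-Analysis.Analysis"
begin

definition controls :: "real \<Rightarrow> ('m::euclidean_space) set \<Rightarrow> (real \<Rightarrow> 'm) set" where
  "controls T U = {u. u \<in> borel_measurable (lebesgue_on {0..T})
                     \<and> (\<forall>s\<in>{0..T}. u s \<in> U) \<and> bounded (u ` {0..T})}"

text \<open>y is the (Caratheodory) solution of dx/ds = f(x,u(s)) on [t,T] with x(t) = x0,
  written in integral form.\<close>
definition is_traj ::
  "('n::euclidean_space \<Rightarrow> 'm \<Rightarrow> 'n) \<Rightarrow> real \<Rightarrow> real \<Rightarrow> 'n \<Rightarrow> (real \<Rightarrow> 'm) \<Rightarrow> (real \<Rightarrow> 'n) \<Rightarrow> bool" where
  "is_traj f T t x0 u y \<longleftrightarrow>
     (\<forall>s\<in>{t..T}. ((\<lambda>r. f (y r) (u r)) has_integral (y s - x0)) {t..s})"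

definition outcome_set ::
  "('n::euclidean_space \<Rightarrow> 'm::euclidean_space \<Rightarrow> 'n) \<Rightarrow> ('n \<Rightarrow> 'm \<Rightarrow> 'p::euclidean_space)
    \<Rightarrow> 'm set \<Rightarrow> real \<Rightarrow> real \<Rightarrow> 'n \<Rightarrow> 'p set" where
  "outcome_set f L U T t x0 =
     {J. \<exists>u\<in>controls T U. \<exists>y. is_traj f T t x0 u y \<and> J = integral {t..T} (\<lambda>s. L (y s) (u s))}"

definition efficient_set :: "('p::real_vector) set \<Rightarrow> 'p set \<Rightarrow> 'p set" where
  "efficient_set S P = {y \<in> S. ((\<lambda>q. y - q) ` P) \<inter> S = {y}}"

definition value_map where
  "value_map f L U P T t x0 = efficient_set (closure (outcome_set f L U T t x0)) P"

definition value_map_up where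
  "value_map_up f L U P T t x0 = {v + q | v q. v \<in> value_map f L U P T t x0 \<and> q \<in> P}"

definition outer_semicontinuous_at :: "('a::topological_space \<Rightarrow> 'b::topological_space set) \<Rightarrow> 'a set \<Rightarrow> 'a \<Rightarrow> bool" where
  "outer_semicontinuous_at F D z \<longleftrightarrow>
     {y. \<exists>zk yk. (\<forall>k. zk k \<in> D) \<and> zk \<longlonglongrightarrow> z \<and> yk \<longlonglongrightarrow> y \<and> (\<forall>k. yk k \<in> F (zk k))} \<subseteq> F z"

end

theory Submission
  imports Defs
begin


locale moc =
  fixes T :: real and U :: "'m::euclidean_space set"
    and f :: "'n::euclidean_space \<Rightarrow> 'm \<Rightarrow> 'n" and L :: "'n \<Rightarrow> 'm \<Rightarrow> 'p::euclidean_space"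
    and K_f M_f K_L M_L :: real
  assumes T: "T > 0" and Une: "U \<noteq> {}" and Ucomp: "compact U"
    and fcont: "continuous_on (UNIV \<times> U) (\<lambda>(x, u). f x u)"
    and flip: "\<And>x1 x2 u. u \<in> U \<Longrightarrow> norm (f x1 u - f x2 u) \<le> K_f * norm (x1 - x2)"
    and fbd: "\<And>x u. u \<in> U \<Longrightarrow> norm (f x u) \<le> M_f"
    and Lcont: "continuous_on (UNIV \<times> U) (\<lambda>(x, u). L x u)"
    and Lbd: "\<And>x u. u \<in> U \<Longrightarrow> norm (L x u) \<le> M_L"
    and Llip: "\<And>x1 x2 u. u \<in> U \<Longrightarrow> norm (L x1 u - L x2 u) \<le> K_L * norm (x1 - x2)"
begin

lemma comp_measurable:
  fixes F :: "'n \<Rightarrow> 'm \<Rightarrow> 'q::euclidean_space"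
  assumes F: "continuous_on (UNIV \<times> U) (\<lambda>(x, v). F x v)" and u: "u \<in> controls T U"
    and ab: "{a..b} \<subseteq> {0..T}" and y: "continuous_on {a..b} y"
  shows "(\<lambda>r. F (y r) (u r)) \<in> borel_measurable (lebesgue_on {a..b})"
proof -
  have u1: "u \<in> borel_measurable (lebesgue_on {a..b})"
    using u ab measurable_restrict_mono unfolding controls_def by blast
  have y1: "y \<in> borel_measurable (lebesgue_on {a..b})"
    by (rule continuous_imp_measurable_on_sets_lebesgue[OF y]) auto
  have p: "(\<lambda>r. (y r, u r)) \<in> borel_measurable (lebesgue_on {a..b})"
    using borel_measurable_Pair[OF y1 u1] .
  have p2: "(\<lambda>r. (y r, u r)) \<in> measurable (lebesgue_on {a..b}) (restrict_space borel (UNIV \<times> U))"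
    apply (rule measurable_restrict_space2)
    using u ab p by (auto simp: controls_def)
  have "(\<lambda>(x, v). F x v) \<in> borel_measurable (restrict_space borel (UNIV \<times> U))"
    by (rule borel_measurable_continuous_on_restrict[OF F])
  from measurable_comp[OF p2 this] show ?thesis by (simp add: o_def)
qed

lemma comp_integrable:
  fixes F :: "'n \<Rightarrow> 'm \<Rightarrow> 'q::euclidean_space"
  assumes F: "continuous_on (UNIV \<times> U) (\<lambda>(x, v). F x v)" and Fb: "\<And>x v. v \<in> U \<Longrightarrow> norm (F x v) \<le> M"
    and u: "u \<in> controls T U"
    and ab: "{a..b} \<subseteq> {0..T}" and y: "continuous_on {a..b} y"
  shows "(\<lambda>r. F (y r) (u r)) absolutely_integrable_on {a..b}"
proof (rule measurable_bounded_by_integrable_imp_absolutely_integrable[where g="\<lambda>_. M"])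
  show "(\<lambda>r. F (y r) (u r)) \<in> borel_measurable (lebesgue_on {a..b})"
    by (rule comp_measurable[OF F u ab y])
  show "(\<lambda>_. M) integrable_on {a..b}" by (intro integrable_on_const) auto
  show "norm (F (y x) (u x)) \<le> M" if "x \<in> {a..b}" for x
    using that ab u Fb by (auto simp: controls_def)
qed auto

lemma Mf_nonneg: "0 \<le> M_f"
  using Une fbd norm_ge_zero order_trans by blast

lemma Lbound_nonneg: "0 \<le> M_L"
  using Une Lbd norm_ge_zero order_trans by blast

lemma traj_int:
  assumes tr: "is_traj f T t x0 u y" and t: "t \<in> {0..T}"
  shows "(\<lambda>r. f (y r) (u r)) integrable_on {t..T}"
  using tr t unfolding is_traj_def by (meson atLeastAtMost_iff has_integral_integrable order_refl)

lemma traj_eq: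
  assumes tr: "is_traj f T t x0 u y" and s: "s \<in> {t..T}"
  shows "y s = x0 + integral {t..s} (\<lambda>r. f (y r) (u r))"
  using tr s unfolding is_traj_def by (metis add.commute diff_add_cancel integral_unique)

lemma traj_cont:
  assumes tr: "is_traj f T t x0 u y" and t: "t \<in> {0..T}"
  shows "continuous_on {t..T} y"
proof -
  have "continuous_on {t..T} (\<lambda>s. x0 + integral {t..s} (\<lambda>r. f (y r) (u r)))"
    by (intro continuous_intros indefinite_integral_continuous_1 traj_int[OF tr t])
  then show ?thesis
    by (rule continuous_on_eq) (use traj_eq[OF tr] in auto)
qed

lemma traj_bd:
  assumes tr: "is_traj f T t x0 u y" and u: "u \<in> controls T U" and t: "t \<in> {0..T}" and s: "s \<in> {t..T}"
  shows "norm (y s - x0) \<le> M_f * (s - t)"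
proof -
  have hi: "((\<lambda>r. f (y r) (u r)) has_integral (y s - x0)) (cbox t s)"
    using tr s unfolding is_traj_def by auto
  have bnd: "\<And>x. x \<in> cbox t s \<Longrightarrow> norm (f (y x) (u x)) \<le> M_f"
    using u t s fbd by (auto simp: controls_def)
  show ?thesis using has_integral_bound[OF Mf_nonneg hi bnd] s by simp
qed

end

lemma exp_int:
  assumes "a \<le> s" "(K::real) > 0"
  shows "((\<lambda>r. K * exp (2*K*(r-a))) has_integral ((exp (2*K*(s-a)) - 1)/2)) {a..s}"
proof -
  have "((\<lambda>r. K * exp (2*K*(r-a))) has_integral (exp (2*K*(s-a))/2 - exp (2*K*(a-a))/2)) {a..s}"
  proof (rule fundamental_theorem_of_calculus[OF assms(1)])
    fix x assume "x \<in> {a..s}"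
    have "((\<lambda>r. exp (2*K*(r-a))/2) has_real_derivative (K * exp (2*K*(x-a)))) (at x within {a..s})"
      by (auto intro!: derivative_eq_intros)
    then show "((\<lambda>r. exp (2*K*(r-a))/2) has_vector_derivative (K * exp (2*K*(x-a)))) (at x within {a..s})"
      by (simp add: has_real_derivative_iff_has_vector_derivative)
  qed
  then show ?thesis by (simp add: diff_divide_distrib)
qed

lemma gronwall_w:
  fixes d :: "real \<Rightarrow> 'a::euclidean_space"
  assumes ab: "a \<le> b" and K: "K > 0" and dc: "continuous_on {a..b} d" and delta: "\<delta> \<ge> 0"
    and H: "\<And>s. s \<in> {a..b} \<Longrightarrow> norm (d s) \<le> \<delta> + integral {a..s} (\<lambda>r. K * norm (d r))"
    and s: "s \<in> {a..b}"
  shows "norm (d s) \<le> 2 * \<delta> * exp (2*K*(s-a))"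
proof -
  define \<phi> where "\<phi> s = exp (-(2*K*(s-a))) * norm (d s)" for s
  have phic: "continuous_on {a..b} \<phi>" unfolding \<phi>_def by (intro continuous_intros dc)
  obtain s0 where s0: "s0 \<in> {a..b}" and mx: "\<And>s. s \<in> {a..b} \<Longrightarrow> \<phi> s \<le> \<phi> s0"
    using continuous_attains_sup[OF compact_Icc _ phic] ab by auto
  define m where "m = \<phi> s0"
  have m0: "m \<ge> 0" unfolding m_def \<phi>_def by simp
  have nd: "norm (d r) \<le> exp (2*K*(r-a)) * m" if "r \<in> {a..b}" for r
  proof -
    have "norm (d r) = exp (2*K*(r-a)) * \<phi> r" unfolding \<phi>_def by (simp add: mult.assoc[symmetric] exp_add[symmetric])
    also have "\<dots> \<le> exp (2*K*(r-a)) * m" using mx[OF that] unfolding m_def by simp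
    finally show ?thesis .
  qed
  define E where "E = exp (2*K*(s0-a))"
  have E1: "E \<ge> 1" unfolding E_def using s0 K by simp
  have "integral {a..s0} (\<lambda>r. K * norm (d r)) \<le> integral {a..s0} (\<lambda>r. K * exp (2*K*(r-a)) * m)"
  proof (rule integral_le)
    show "(\<lambda>r. K * norm (d r)) integrable_on {a..s0}"
      by (intro integrable_continuous_interval continuous_intros continuous_on_subset[OF dc]) (use s0 in auto)
    show "(\<lambda>r. K * exp (2*K*(r-a)) * m) integrable_on {a..s0}"
      by (intro integrable_continuous_interval continuous_intros)
    show "K * norm (d x) \<le> K * exp (2*K*(x-a)) * m" if "x \<in> {a..s0}" for x
      using nd[of x] that s0 K by (auto simp: mult.assoc)
  qed
  also have "\<dots> = m * ((E - 1)/2)"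
    using has_integral_mult_left[OF exp_int[of a s0 K], of m] s0 K unfolding E_def
    by (auto dest!: integral_unique simp: mult_ac)
  finally have "norm (d s0) \<le> \<delta> + m * ((E - 1)/2)" using H[OF s0] by linarith
  moreover have "norm (d s0) = E * m" unfolding m_def \<phi>_def E_def by (simp add: exp_minus)
  ultimately have "E * m \<le> \<delta> + m * ((E - 1)/2)" by simp
  then have "m * ((E + 1)/2) \<le> \<delta>" by (simp add: field_simps)
  moreover have "m \<le> m * ((E + 1)/2)" using mult_left_mono[of 1 "(E+1)/2" m] E1 m0 by simp
  ultimately have "m \<le> \<delta>" by linarith
  then have "exp (2*K*(s-a)) * m \<le> exp (2*K*(s-a)) * \<delta>" by (simp add: mult_left_mono)
  also have "\<dots> \<le> 2 * \<delta> * exp (2*K*(s-a))" using delta by simp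
  finally show ?thesis using nd[OF s] by linarith
qed

context moc begin

definition "Kf = max K_f 0 + 1"
definition "KL = max K_L 0"
definition "CC = M_L + KL * T * 2 * exp (2 * Kf * T) * (M_f + 1)"

lemma Kf_pos: "Kf > 0" unfolding Kf_def by simp
lemma KL_nonneg: "KL \<ge> 0" unfolding KL_def by simp

lemma flip': "u \<in> U \<Longrightarrow> norm (f x1 u - f x2 u) \<le> Kf * norm (x1 - x2)"
  using flip[of u x1 x2] unfolding Kf_def
  by (smt (verit, best) mult_right_mono norm_ge_zero)

lemma Llip': "u \<in> U \<Longrightarrow> norm (L x1 u - L x2 u) \<le> KL * norm (x1 - x2)"
  using Llip[of u x1 x2] unfolding KL_def
  by (smt (verit, best) mult_right_mono norm_ge_zero)

lemma traj_compare:
  assumes u: "u \<in> controls T U" and t1: "t1 \<in> {0..T}" and t2: "t2 \<in> {t1..T}"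
    and tr1: "is_traj f T t1 x1 u y1" and tr2: "is_traj f T t2 x2 u y2"
  shows "norm (integral {t1..T} (\<lambda>s. L (y1 s) (u s)) - integral {t2..T} (\<lambda>s. L (y2 s) (u s)))
           \<le> M_L * (t2 - t1) + KL * T * (2 * (M_f * (t2 - t1) + norm (x1 - x2)) * exp (2 * Kf * T))"
proof -
  have t2': "t2 \<in> {0..T}" using t1 t2 by auto
  have uU: "\<And>r. r \<in> {0..T} \<Longrightarrow> u r \<in> U" using u by (auto simp: controls_def)
  define g1 where "g1 r = f (y1 r) (u r)" for r
  define g2 where "g2 r = f (y2 r) (u r)" for r
  define d where "d s = y1 s - y2 s" for s
  define \<delta> where "\<delta> = M_f * (t2 - t1) + norm (x1 - x2)"
  have \<delta>0: "\<delta> \<ge> 0" unfolding \<delta>_def using Mf_nonneg t2 by auto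
  have c1: "continuous_on {t1..T} y1" by (rule traj_cont[OF tr1 t1])
  have c2: "continuous_on {t2..T} y2" by (rule traj_cont[OF tr2 t2'])
  have dc: "continuous_on {t2..T} d" unfolding d_def
    by (intro continuous_intros c2 continuous_on_subset[OF c1]) (use t2 in auto)
  have i1: "g1 integrable_on {t1..T}" unfolding g1_def by (rule traj_int[OF tr1 t1])
  have i2: "g2 integrable_on {t2..T}" unfolding g2_def by (rule traj_int[OF tr2 t2'])
  have y1t2: "norm (y1 t2 - x2) \<le> \<delta>"
  proof -
    have "norm (y1 t2 - x1) \<le> M_f * (t2 - t1)" by (rule traj_bd[OF tr1 u t1 t2])
    then show ?thesis unfolding \<delta>_def using norm_triangle_ineq[of "y1 t2 - x1" "x1 - x2"] by simp
  qed
  have H: "norm (d s) \<le> \<delta> + integral {t2..s} (\<lambda>r. Kf * norm (d r))" if s: "s \<in> {t2..T}" for s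
  proof -
    have i1s: "g1 integrable_on {t1..s}" by (rule integrable_subinterval_real[OF i1]) (use s in auto)
    have i1s': "g1 integrable_on {t2..s}" by (rule integrable_subinterval_real[OF i1]) (use s t2 in auto)
    have i2s: "g2 integrable_on {t2..s}" by (rule integrable_subinterval_real[OF i2]) (use s in auto)
    have "y1 s = x1 + integral {t1..s} g1" using traj_eq[OF tr1, where s=s] s t2 unfolding g1_def by auto
    also have "integral {t1..s} g1 = integral {t1..t2} g1 + integral {t2..s} g1"
      using Henstock_Kurzweil_Integration.integral_combine[of t1 t2 s g1] i1s s t2 by auto
    finally have "y1 s = x1 + (integral {t1..t2} g1 + integral {t2..s} g1)" .
    moreover have "x1 + integral {t1..t2} g1 = y1 t2" using traj_eq[OF tr1, where s=t2] t2 unfolding g1_def by auto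
    ultimately have e1: "y1 s = y1 t2 + integral {t2..s} g1" by (simp add: add.assoc[symmetric])
    have e2: "y2 s = x2 + integral {t2..s} g2" using traj_eq[OF tr2, where s=s] s unfolding g2_def by auto
    have deq: "d s = (y1 t2 - x2) + integral {t2..s} (\<lambda>r. g1 r - g2 r)"
      unfolding d_def e1 e2 integral_diff[OF i1s' i2s] by simp
    have ib: "norm (integral {t2..s} (\<lambda>r. g1 r - g2 r)) \<le> integral {t2..s} (\<lambda>r. Kf * norm (d r))"
    proof (rule integral_norm_bound_integral)
      show "(\<lambda>r. g1 r - g2 r) integrable_on {t2..s}" using i1s' i2s by (rule integrable_diff)
      show "(\<lambda>r. Kf * norm (d r)) integrable_on {t2..s}"
        by (intro integrable_continuous_interval continuous_intros continuous_on_subset[OF dc]) (use s in auto)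
      show "norm (g1 x - g2 x) \<le> Kf * norm (d x)" if "x \<in> {t2..s}" for x
        unfolding g1_def g2_def d_def by (rule flip') (use that s t1 t2 uU in auto)
    qed
    show ?thesis unfolding deq using ib y1t2 norm_triangle_ineq[of "y1 t2 - x2" "integral {t2..s} (\<lambda>r. g1 r - g2 r)"]
      by linarith
  qed
  have dbd: "norm (d s) \<le> 2 * \<delta> * exp (2 * Kf * T)" if s: "s \<in> {t2..T}" for s
  proof -
    have "norm (d s) \<le> 2 * \<delta> * exp (2 * Kf * (s - t2))"
      by (rule gronwall_w[OF _ Kf_pos dc \<delta>0 H s]) (use s in auto)
    also have "\<dots> \<le> 2 * \<delta> * exp (2 * Kf * T)"
      using \<delta>0 Kf_pos s t1 t2 by (intro mult_left_mono) (auto simp: mult_left_mono)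
    finally show ?thesis .
  qed
  define l1 where "l1 r = L (y1 r) (u r)" for r
  define l2 where "l2 r = L (y2 r) (u r)" for r
  have li1: "l1 integrable_on {t1..T}" unfolding l1_def
    using comp_integrable[OF Lcont Lbd u _ c1] t1 absolutely_integrable_on_def by auto
  have li1a: "l1 integrable_on {t1..t2}" by (rule integrable_subinterval_real[OF li1]) (use t2 in auto)
  have li1b: "l1 integrable_on {t2..T}" by (rule integrable_subinterval_real[OF li1]) (use t2 in auto)
  have li2: "l2 integrable_on {t2..T}" unfolding l2_def
    using comp_integrable[OF Lcont Lbd u _ c2] t2' absolutely_integrable_on_def by auto
  have eq: "integral {t1..T} l1 - integral {t2..T} l2 = integral {t1..t2} l1 + integral {t2..T} (\<lambda>r. l1 r - l2 r)"
    using Henstock_Kurzweil_Integration.integral_combine[of t1 t2 T l1] li1 t2 integral_diff[OF li1b li2] by auto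
  have b1: "norm (integral {t1..t2} l1) \<le> M_L * (t2 - t1)"
  proof -
    have "norm (integral {t1..t2} l1) \<le> integral {t1..t2} (\<lambda>_. M_L)"
      by (rule integral_norm_bound_integral[OF li1a]) (use t1 t2 uU Lbd in \<open>auto simp: l1_def\<close>)
    then show ?thesis using t2 by (simp add: mult.commute)
  qed
  have b2: "norm (integral {t2..T} (\<lambda>r. l1 r - l2 r)) \<le> KL * T * (2 * \<delta> * exp (2 * Kf * T))"
  proof -
    have "norm (integral {t2..T} (\<lambda>r. l1 r - l2 r)) \<le> integral {t2..T} (\<lambda>_. KL * (2 * \<delta> * exp (2 * Kf * T)))"
    proof (rule integral_norm_bound_integral)
      show "(\<lambda>r. l1 r - l2 r) integrable_on {t2..T}" using li1b li2 by (rule integrable_diff)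
      show "norm (l1 x - l2 x) \<le> KL * (2 * \<delta> * exp (2 * Kf * T))" if "x \<in> {t2..T}" for x
      proof -
        have "norm (l1 x - l2 x) \<le> KL * norm (d x)"
          unfolding l1_def l2_def d_def by (rule Llip') (use that t1 t2 uU in auto)
        also have "\<dots> \<le> KL * (2 * \<delta> * exp (2 * Kf * T))"
          by (rule mult_left_mono[OF dbd[OF that] KL_nonneg])
        finally show ?thesis .
      qed
    qed auto
    also have "\<dots> = KL * (2 * \<delta> * exp (2 * Kf * T)) * (T - t2)" using t2 by simp
    also have "\<dots> \<le> KL * (2 * \<delta> * exp (2 * Kf * T)) * T"
      using t2 t1 KL_nonneg \<delta>0 by (intro mult_left_mono) auto
    finally show ?thesis by (simp add: mult_ac)
  qed
  have "norm (integral {t1..T} l1 - integral {t2..T} l2) \<le> M_L * (t2 - t1) + KL * T * (2 * \<delta> * exp (2 * Kf * T))"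
    unfolding eq using b1 b2 norm_triangle_ineq[of "integral {t1..t2} l1" "integral {t2..T} (\<lambda>r. l1 r - l2 r)"]
    by linarith
  then show ?thesis unfolding l1_def l2_def \<delta>_def .
qed


lemma traj_exists:
  assumes u: "u \<in> controls T U" and t: "t \<in> {0..T}"
  shows "\<exists>y. is_traj f T t x0 u y"
proof -
  define K where "K = Kf"
  have K: "K > 0" unfolding K_def by (rule Kf_pos)
  define c where "c s = max t (min T s)" for s
  have cc: "continuous_on UNIV c" unfolding c_def by (intro continuous_intros)
  have cr: "c s \<in> {t..T}" for s unfolding c_def using t by auto
  have cid: "s \<in> {t..T} \<Longrightarrow> c s = s" for s unfolding c_def by auto
  define yw where "yw w r = exp (2*K*(r-t)) *\<^sub>R apply_bcontfun w r" for w :: "real \<Rightarrow>\<^sub>C 'n" and r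
  have ywc: "continuous_on A (yw w)" for w A unfolding yw_def by (intro continuous_intros) auto
  define G where "G w s = exp (-(2*K*(s-t))) *\<^sub>R (x0 + integral {t..s} (\<lambda>r. f (yw w r) (u r)))" for w s
  have fint: "(\<lambda>r. f (yw w r) (u r)) integrable_on {t..a}" if "a \<in> {t..T}" for w a
    using comp_integrable[OF fcont fbd u _ ywc, of t a] that t absolutely_integrable_on_def by auto
  have Gc: "continuous_on {t..T} (G w)" for w
    unfolding G_def by (intro continuous_intros indefinite_integral_continuous_1 fint) (use t in auto)
  have Gb: "(\<lambda>s. G w (c s)) \<in> bcontfun" for w
  proof -
    have "continuous_on UNIV (\<lambda>s. G w (c s))"
      by (rule continuous_on_compose2[OF Gc cc]) (use cr in auto)
    moreover have "bounded (range (\<lambda>s. G w (c s)))"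
    proof -
      have "compact (G w ` {t..T})" by (rule compact_continuous_image[OF Gc compact_Icc])
      then have "bounded (G w ` {t..T})" by (rule compact_imp_bounded)
      moreover have "range (\<lambda>s. G w (c s)) \<subseteq> G w ` {t..T}" using cr by auto
      ultimately show ?thesis by (rule bounded_subset)
    qed
    ultimately show ?thesis unfolding bcontfun_def by auto
  qed
  define \<Psi> where "\<Psi> w = Bcontfun (\<lambda>s. G w (c s))" for w
  have \<Psi>a: "apply_bcontfun (\<Psi> w) s = G w (c s)" for w s
    unfolding \<Psi>_def using Bcontfun_inverse[OF Gb] by simp
  have Gd: "norm (G w a - G v a) \<le> (1/2) * dist w v" if a: "a \<in> {t..T}" for w v a
  proof -
    define E where "E = exp (2*K*(a-t))"
    have E1: "E \<ge> 1" unfolding E_def using a K by simp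
    have iw: "(\<lambda>r. f (yw w r) (u r)) integrable_on {t..a}" and iv: "(\<lambda>r. f (yw v r) (u r)) integrable_on {t..a}"
      using fint a by auto
    have "G w a - G v a = exp (-(2*K*(a-t))) *\<^sub>R integral {t..a} (\<lambda>r. f (yw w r) (u r) - f (yw v r) (u r))"
      unfolding G_def integral_diff[OF iw iv] by (simp add: algebra_simps)
    then have "norm (G w a - G v a) = exp (-(2*K*(a-t))) * norm (integral {t..a} (\<lambda>r. f (yw w r) (u r) - f (yw v r) (u r)))"
      by simp
    also have "norm (integral {t..a} (\<lambda>r. f (yw w r) (u r) - f (yw v r) (u r))) \<le> integral {t..a} (\<lambda>r. K * exp (2*K*(r-t)) * dist w v)"
    proof (rule integral_norm_bound_integral)
      show "(\<lambda>r. f (yw w r) (u r) - f (yw v r) (u r)) integrable_on {t..a}" using iw iv by (rule integrable_diff)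
      show "(\<lambda>r. K * exp (2*K*(r-t)) * dist w v) integrable_on {t..a}"
        by (intro integrable_continuous_interval continuous_intros)
      show "norm (f (yw w r) (u r) - f (yw v r) (u r)) \<le> K * exp (2*K*(r-t)) * dist w v" if r: "r \<in> {t..a}" for r
      proof -
        have uU: "u r \<in> U" using u r a t by (auto simp: controls_def)
        have "norm (f (yw w r) (u r) - f (yw v r) (u r)) \<le> K * norm (yw w r - yw v r)"
          unfolding K_def by (rule flip'[OF uU])
        also have "norm (yw w r - yw v r) = exp (2*K*(r-t)) * norm (apply_bcontfun w r - apply_bcontfun v r)"
          unfolding yw_def by (simp add: scaleR_diff_right[symmetric])
        also have "\<dots> \<le> exp (2*K*(r-t)) * dist w v"
          using dist_bounded[of w r v] by (simp add: dist_norm)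
        finally show ?thesis using K by (simp add: mult.assoc mult_left_mono)
      qed
    qed
    also have "integral {t..a} (\<lambda>r. K * exp (2*K*(r-t)) * dist w v) = ((E - 1)/2) * dist w v"
      using has_integral_mult_left[OF exp_int[of t a K], of "dist w v"] a K unfolding E_def
      by (auto dest!: integral_unique)
    finally have "norm (G w a - G v a) \<le> exp (-(2*K*(a-t))) * (((E - 1)/2) * dist w v)"
      by (simp add: mult_left_mono)
    also have "\<dots> = ((1 - 1/E)/2) * dist w v"
    proof -
      have ex: "exp (-(2*K*(a-t))) = 1/E" unfolding E_def by (simp add: exp_minus inverse_eq_divide)
      show ?thesis unfolding ex using E1 by (simp add: field_simps)
    qed
    also have "\<dots> \<le> (1/2) * dist w v"
      using E1 by (intro mult_right_mono) auto
    finally show ?thesis .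
  qed
  have contr: "\<forall>w v. dist (\<Psi> w) (\<Psi> v) \<le> (1/2) * dist w v"
  proof (intro allI dist_bound)
    fix w v s
    show "dist (apply_bcontfun (\<Psi> w) s) (apply_bcontfun (\<Psi> v) s) \<le> (1/2) * dist w v"
      unfolding \<Psi>a dist_norm[of "G w (c s)" "G v (c s)"] by (rule Gd[OF cr])
  qed
  obtain w where w: "\<Psi> w = w" using banach_fix_type[OF _ _ contr] by auto
  have yeq: "yw w s = x0 + integral {t..s} (\<lambda>r. f (yw w r) (u r))" if s: "s \<in> {t..T}" for s
  proof -
    have "apply_bcontfun w s = G w s" using \<Psi>a[of w s] w cid[OF s] by simp
    then show ?thesis unfolding yw_def G_def
      by (simp add: mult.assoc[symmetric] exp_add[symmetric])
  qed
  have "is_traj f T t x0 u (yw w)"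
    unfolding is_traj_def
  proof
    fix s assume s: "s \<in> {t..T}"
    show "((\<lambda>r. f (yw w r) (u r)) has_integral (yw w s - x0)) {t..s}"
      using integrable_integral[OF fint[OF s]] yeq[OF s] by simp
  qed
  then show ?thesis by blast
qed


end



lemma cone_add:
  assumes "convex P" "cone P" "a \<in> P" "b \<in> P" shows "a + b \<in> P"
  using assms convex_cone by blast

lemma cone_sum:
  assumes "convex P" "cone P" "0 \<in> P" "finite A" "\<And>x. x \<in> A \<Longrightarrow> g x \<in> P"
  shows "sum g A \<in> P"
  using assms(4,5)
proof (induction A rule: finite_induct)
  case empty then show ?case using assms(3) by simp
next
  case (insert x F) then show ?case using cone_add[OF assms(1,2)] by simp
qed

lemma pointed_functional:
  fixes P :: "'a::euclidean_space set"
  assumes cl: "closed P" and cv: "convex P" and cn: "cone P" and z: "0 \<in> P"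
    and pt: "P \<inter> uminus ` P = {0}"
  shows "\<exists>w. \<forall>p\<in>P. p \<noteq> 0 \<longrightarrow> w \<bullet> p > 0"
proof -
  define K where "K = P \<inter> sphere 0 1"
  have Kc: "compact K" unfolding K_def by (intro closed_Int_compact cl compact_sphere)
  define C where "C = convex hull K"
  have Cc: "compact C" unfolding C_def by (rule compact_convex_hull[OF Kc])
  have C0: "0 \<notin> C"
  proof
    assume "0 \<in> C"
    then obtain S u where S: "finite S" "S \<subseteq> K" and u0: "\<forall>x\<in>S. 0 \<le> u x" and u1: "sum u S = 1"
      and us: "(\<Sum>v\<in>S. u v *\<^sub>R v) = 0"
      unfolding C_def convex_hull_explicit by blast
    have "\<exists>v0\<in>S. u v0 > 0"
    proof (rule ccontr)
      assume "\<not> (\<exists>v0\<in>S. u v0 > 0)"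
      then have "\<forall>v\<in>S. u v = 0" using u0 by (meson dual_order.antisym not_le)
      then have "sum u S = 0" by simp
      with u1 show False by simp
    qed
    then obtain v0 where v0: "v0 \<in> S" "u v0 > 0" by blast
    have "(\<Sum>v\<in>S. u v *\<^sub>R v) = u v0 *\<^sub>R v0 + (\<Sum>v\<in>S - {v0}. u v *\<^sub>R v)"
      using sum.remove[OF S(1) v0(1)] .
    with us have eq: "u v0 *\<^sub>R v0 = - (\<Sum>v\<in>S - {v0}. u v *\<^sub>R v)"
      by (simp add: eq_neg_iff_add_eq_0)
    have KP: "v \<in> P" if "v \<in> S" for v using that S(2) unfolding K_def by auto
    have p1: "u v0 *\<^sub>R v0 \<in> P" using cn KP[OF v0(1)] v0(2) unfolding cone_def by auto
    have p2: "(\<Sum>v\<in>S - {v0}. u v *\<^sub>R v) \<in> P"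
      apply (rule cone_sum[OF cv cn z])
      using S(1) apply simp
      using cn KP u0 unfolding cone_def by simp
    have "u v0 *\<^sub>R v0 \<in> uminus ` P" unfolding eq by (rule imageI[OF p2])
    then have "u v0 *\<^sub>R v0 = 0" using p1 pt by blast
    moreover have "norm v0 = 1" using v0(1) S(2) unfolding K_def by auto
    ultimately show False using v0(2) by simp
  qed
  obtain a b where ab: "a \<noteq> 0" "0 < b" "\<forall>x\<in>C. a \<bullet> x > b"
    using separating_hyperplane_closed_0[OF _ compact_imp_closed[OF Cc] C0] unfolding C_def by blast
  have "a \<bullet> p > 0" if "p \<in> P" "p \<noteq> 0" for p
  proof -
    have "(1 / norm p) *\<^sub>R p \<in> K" unfolding K_def using that cn unfolding cone_def by auto
    then have "(1 / norm p) *\<^sub>R p \<in> C" unfolding C_def using hull_subset[of K convex] by blast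
    then have "a \<bullet> ((1 / norm p) *\<^sub>R p) > b" using ab(3) by blast
    then have "a \<bullet> ((1 / norm p) *\<^sub>R p) > 0" using ab(2) by linarith
    then show ?thesis using that by (simp add: zero_less_divide_iff)
  qed
  then show ?thesis by blast
qed

lemma domination:
  fixes P :: "'a::euclidean_space set"
  assumes cl: "closed P" and cv: "convex P" and cn: "cone P" and z: "0 \<in> P"
    and pt: "P \<inter> uminus ` P = {0}" and S: "compact S" and s: "s \<in> S"
  shows "\<exists>e\<in>efficient_set S P. s - e \<in> P"
proof -
  obtain w where w: "\<And>p. p \<in> P \<Longrightarrow> p \<noteq> 0 \<Longrightarrow> w \<bullet> p > 0"
    using pointed_functional[OF cl cv cn z pt] by blast
  define A where "A = S \<inter> {a. s - a \<in> P}"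
  have Ac: "compact A"
  proof -
    have "closed ((\<lambda>a. s - a) -` P)"
      by (rule continuous_closed_vimage[OF cl]) (intro continuous_intros)
    moreover have "(\<lambda>a. s - a) -` P = {a. s - a \<in> P}" by auto
    ultimately have "closed {a. s - a \<in> P}" by simp
    then show ?thesis unfolding A_def by (intro compact_Int_closed S)
  qed
  have "s \<in> A" unfolding A_def using s z by auto
  moreover have "continuous_on A (\<lambda>a. w \<bullet> a)" by (intro continuous_intros)
  ultimately obtain e where e: "e \<in> A" and emin: "\<And>a. a \<in> A \<Longrightarrow> w \<bullet> e \<le> w \<bullet> a"
    using continuous_attains_inf[OF Ac, of "\<lambda>a. w \<bullet> a"] by blast
  have "e \<in> efficient_set S P"
    unfolding efficient_set_def
  proof (intro CollectI conjI)
    show "e \<in> S" using e unfolding A_def by auto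
    show "(\<lambda>q. e - q) ` P \<inter> S = {e}"
    proof
      show "{e} \<subseteq> (\<lambda>q. e - q) ` P \<inter> S" using z \<open>e \<in> S\<close> by force
      show "(\<lambda>q. e - q) ` P \<inter> S \<subseteq> {e}"
      proof
        fix x assume "x \<in> (\<lambda>q. e - q) ` P \<inter> S"
        then obtain q where q: "q \<in> P" "x = e - q" "x \<in> S" by auto
        have "(s - e) + q \<in> P" using cone_add[OF cv cn] e q(1) unfolding A_def by blast
        moreover have "s - x = (s - e) + q" using q by simp
        ultimately have "s - x \<in> P" by metis
        then have "x \<in> A" using q unfolding A_def by auto
        then have "w \<bullet> e \<le> w \<bullet> (e - q)" using emin q by auto
        then have "w \<bullet> q \<le> 0" by (simp add: inner_diff_right)
        then have "q = 0"
        proof (rule contrapos_pp)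
          assume "q \<noteq> 0" then have "w \<bullet> q > 0" by (rule w[OF q(1)])
          then show "\<not> w \<bullet> q \<le> 0" by simp
        qed
        then show "x \<in> {e}" using q by simp
      qed
    qed
  qed
  then show ?thesis using e unfolding A_def by auto
qed



context moc begin

lemma outcome_bd:
  assumes t: "t \<in> {0..T}" and J: "J \<in> outcome_set f L U T t x0"
  shows "norm J \<le> M_L * T"
proof -
  obtain u y where u: "u \<in> controls T U" and tr: "is_traj f T t x0 u y"
    and Jd: "J = integral {t..T} (\<lambda>s. L (y s) (u s))"
    using J unfolding outcome_set_def by blast
  have li: "(\<lambda>s. L (y s) (u s)) integrable_on {t..T}"
    using comp_integrable[OF Lcont Lbd u _ traj_cont[OF tr t]] t absolutely_integrable_on_def by auto
  have "norm J \<le> integral {t..T} (\<lambda>_. M_L)"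
    unfolding Jd by (rule integral_norm_bound_integral[OF li]) (use t u Lbd in \<open>auto simp: controls_def\<close>)
  also have "\<dots> = M_L * (T - t)" using t by (simp add: mult.commute)
  also have "\<dots> \<le> M_L * T" using t Lbound_nonneg by (simp add: mult_left_mono)
  finally show ?thesis .
qed

lemma closure_bd:
  assumes t: "t \<in> {0..T}"
  shows "closure (outcome_set f L U T t x0) \<subseteq> cball 0 (M_L * T)"
  by (rule closure_minimal) (use outcome_bd[OF t] in auto)

lemma approx:
  assumes t: "t \<in> {0..T}" and t': "t' \<in> {0..T}" and J': "J' \<in> outcome_set f L U T t' x'"
  shows "\<exists>J\<in>outcome_set f L U T t x. norm (J - J') \<le>
            M_L * \<bar>t - t'\<bar> + KL * T * (2 * (M_f * \<bar>t - t'\<bar> + norm (x - x')) * exp (2 * Kf * T))"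
proof -
  obtain u y' where u: "u \<in> controls T U" and tr': "is_traj f T t' x' u y'"
    and Jd: "J' = integral {t'..T} (\<lambda>s. L (y' s) (u s))"
    using J' unfolding outcome_set_def by blast
  obtain y where tr: "is_traj f T t x u y" using traj_exists[OF u t] by blast
  define J where "J = integral {t..T} (\<lambda>s. L (y s) (u s))"
  have JY: "J \<in> outcome_set f L U T t x" unfolding outcome_set_def J_def using u tr by blast
  have "norm (J - J') \<le> M_L * \<bar>t - t'\<bar> + KL * T * (2 * (M_f * \<bar>t - t'\<bar> + norm (x - x')) * exp (2 * Kf * T))"
  proof (cases "t \<le> t'")
    case True
    show ?thesis using traj_compare[OF u t _ tr tr'] True t' unfolding J_def Jd by auto
  next
    case False
    have "norm (J' - J) \<le> M_L * (t - t') + KL * T * (2 * (M_f * (t - t') + norm (x' - x)) * exp (2 * Kf * T))"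
      using traj_compare[OF u t' _ tr' tr] False t unfolding J_def Jd by auto
    then show ?thesis using False by (simp add: norm_minus_commute)
  qed
  then show ?thesis using JY by blast
qed

end



theorem proposition7p2:
  fixes T :: real and U :: "(real^'m) set" and P :: "(real^'p) set"
    and f :: "real^'n \<Rightarrow> real^'m \<Rightarrow> real^'n" and L :: "real^'n \<Rightarrow> real^'m \<Rightarrow> real^'p"
    and K_f M_f K_L M_L :: real
  assumes "T > 0"
    and "U \<noteq> {}" and "compact U"
    and "continuous_on (UNIV \<times> U) (\<lambda>(x, u). f x u)"
    and "\<And>x1 x2 u. u \<in> U \<Longrightarrow> norm (f x1 u - f x2 u) \<le> K_f * norm (x1 - x2)"
    and "\<And>x u. u \<in> U \<Longrightarrow> norm (f x u) \<le> M_f"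
    and "continuous_on (UNIV \<times> U) (\<lambda>(x, u). L x u)"
    and "\<And>x u. u \<in> U \<Longrightarrow> norm (L x u) \<le> M_L"
    and "\<And>x1 x2 u. u \<in> U \<Longrightarrow> norm (L x1 u - L x2 u) \<le> K_L * norm (x1 - x2)"
    and "closed P" and "convex P" and "cone P" and "0 \<in> P"
    and "P \<inter> uminus ` P = {0}" and "interior P \<noteq> {}"
    and "t \<in> {0..T}"
  shows "outer_semicontinuous_at (\<lambda>(t, x). value_map_up f L U P T t x) ({0..T} \<times> UNIV) (t, x)"
proof -
  interpret moc T U f L K_f M_f K_L M_L using assms by unfold_locales auto
  note Pcl = \<open>closed P\<close> and Pcv = \<open>convex P\<close> and Pcn = \<open>cone P\<close> and P0 = \<open>0 \<in> P\<close>
    and Ppt = \<open>P \<inter> uminus ` P = {0}\<close> and t = \<open>t \<in> {0..T}\<close>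
  let ?Y = "\<lambda>t x. outcome_set f L U T t x"
  show ?thesis unfolding outer_semicontinuous_at_def
  proof
    fix y assume "y \<in> {y. \<exists>zk yk. (\<forall>k. zk k \<in> {0..T} \<times> UNIV) \<and> zk \<longlonglongrightarrow> (t, x) \<and> yk \<longlonglongrightarrow> y \<and>
        (\<forall>k. yk k \<in> (\<lambda>(t, x). value_map_up f L U P T t x) (zk k))}"
    then obtain zk yk where zD: "\<And>k. zk k \<in> {0..T} \<times> UNIV" and zl: "zk \<longlonglongrightarrow> (t, x)"
      and yl: "yk \<longlonglongrightarrow> y" and yF: "\<And>k. yk k \<in> (\<lambda>(t, x). value_map_up f L U P T t x) (zk k)"
      by blast
    define tk where "tk k = fst (zk k)" for k
    define xk where "xk k = snd (zk k)" for k
    have tkl: "tk \<longlonglongrightarrow> t" unfolding tk_def using tendsto_fst[OF zl] by simp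
    have xkl: "xk \<longlonglongrightarrow> x" unfolding xk_def using tendsto_snd[OF zl] by simp
    have tk01: "tk k \<in> {0..T}" for k unfolding tk_def using zD[of k] by (auto simp: mem_Times_iff)
    have "\<exists>v q. yk k = v + q \<and> v \<in> closure (?Y (tk k) (xk k)) \<and> q \<in> P" for k
    proof -
      have zk: "zk k = (tk k, xk k)" unfolding tk_def xk_def by simp
      from yF[of k] show ?thesis unfolding zk value_map_up_def value_map_def efficient_set_def by auto
    qed
    then obtain vk qk where yvq: "\<And>k. yk k = vk k + qk k" and vkY: "\<And>k. vk k \<in> closure (?Y (tk k) (xk k))"
      and qkP: "\<And>k. qk k \<in> P" by metis
    have vkb: "vk k \<in> cball 0 (M_L * T)" for k using closure_bd[OF tk01] vkY by blast
    have "\<exists>l\<in>cball 0 (M_L * T). \<exists>r::nat\<Rightarrow>nat. strict_mono r \<and> (vk \<circ> r) \<longlonglongrightarrow> l"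
      using compact_imp_seq_compact[OF compact_cball[of 0 "M_L * T"]] vkb unfolding seq_compact_def by blast
    then obtain v r where r: "strict_mono r" and vl: "(vk \<circ> r) \<longlonglongrightarrow> v" by blast
    have "y - v \<in> P"
    proof (rule closed_sequentially[OF Pcl])
      show "(qk \<circ> r) n \<in> P" for n using qkP by simp
      have "(\<lambda>n. yk (r n) - (vk \<circ> r) n) \<longlonglongrightarrow> y - v"
        by (intro tendsto_intros vl LIMSEQ_subseq_LIMSEQ[OF yl r, unfolded o_def])
      then show "(qk \<circ> r) \<longlonglongrightarrow> y - v" using yvq by (simp add: o_def algebra_simps)
    qed
    have vcl: "v \<in> closure (?Y t x)"
      unfolding closure_approachable
    proof (intro allI impI)
      fix e :: real assume e: "e > 0"
      define B where "B k = M_L * \<bar>t - tk (r k)\<bar> + KL * T * (2 * (M_f * \<bar>t - tk (r k)\<bar> + norm (x - xk (r k))) * exp (2 * Kf * T))" for k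
      have tr: "(\<lambda>k. tk (r k)) \<longlonglongrightarrow> t" using LIMSEQ_subseq_LIMSEQ[OF tkl r] by (simp add: o_def)
      have xr: "(\<lambda>k. xk (r k)) \<longlonglongrightarrow> x" using LIMSEQ_subseq_LIMSEQ[OF xkl r] by (simp add: o_def)
      have "B \<longlonglongrightarrow> M_L * \<bar>t - t\<bar> + KL * T * (2 * (M_f * \<bar>t - t\<bar> + norm (x - x)) * exp (2 * Kf * T))"
        unfolding B_def by (intro tendsto_intros tr xr)
      then have Bl: "B \<longlonglongrightarrow> 0" by simp
      have "eventually (\<lambda>k. B k < e/3) sequentially"
        using order_tendstoD(2)[OF Bl, of "e/3"] e by simp
      moreover have "eventually (\<lambda>k. dist ((vk \<circ> r) k) v < e/3) sequentially"
        using tendstoD[OF vl, of "e/3"] e by simp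
      ultimately have "eventually (\<lambda>k. B k < e/3 \<and> dist ((vk \<circ> r) k) v < e/3) sequentially"
        by (rule eventually_conj)
      then obtain N where N: "\<And>k. k \<ge> N \<Longrightarrow> B k < e/3 \<and> dist ((vk \<circ> r) k) v < e/3"
        unfolding eventually_sequentially by blast
      define k where "k = N"
      have k1: "B k < e/3" and k2: "dist (vk (r k)) v < e/3" using N[of k] unfolding k_def by auto
      obtain J' where J': "J' \<in> ?Y (tk (r k)) (xk (r k))" and J'd: "dist J' (vk (r k)) < e/3"
      proof -
        have "e/3 > 0" using e by simp
        then show ?thesis using vkY[of "r k"] that unfolding closure_approachable by blast
      qed
      obtain J where J: "J \<in> ?Y t x" and JJ': "norm (J - J') \<le> B k"
        using approx[OF t tk01 J', of x] unfolding B_def by blast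
      have "dist J v \<le> dist J J' + dist J' (vk (r k)) + dist (vk (r k)) v"
        using dist_triangle[of J v J'] dist_triangle[of J' v "vk (r k)"] by linarith
      also have "\<dots> < e" using JJ' J'd k1 k2 by (simp add: dist_norm)
      finally show "\<exists>J\<in>?Y t x. dist J v < e" using J by blast
    qed
    have cmp: "compact (closure (?Y t x))"
      using closure_bd[OF t] bounded_cball bounded_subset compact_eq_bounded_closed by blast
    obtain e where e: "e \<in> efficient_set (closure (?Y t x)) P" and ve: "v - e \<in> P"
      using domination[OF Pcl Pcv Pcn P0 Ppt cmp vcl] by blast
    have "(v - e) + (y - v) \<in> P" using cone_add[OF Pcv Pcn ve \<open>y - v \<in> P\<close>] .
    moreover have "y = e + ((v - e) + (y - v))" by simp
    ultimately have "y \<in> value_map_up f L U P T t x"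
      unfolding value_map_up_def value_map_def using e by blast
    then show "y \<in> (\<lambda>(t, x). value_map_up f L U P T t x) (t, x)" by simp
  qed
qed

end
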